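(* Let $A,B\in\mathcal{B}_F$ and $1\le p\le\infty$. Then $d_p(\pi(A),\pi(B))\le 2\,d_p(A,B)$.
   Context: A persistence barcode is a finite multiset of intervals $[x,y]$, $x\le y$; $\mathcal{B}_F$ is the set of barcodes all of whose intervals have finite endpoints. The projection $\pi$ sends $A=\{[x_i^a,y_i^a]\}$ to $\pi(A)=\{[0,y_i^a-x_i^a]\}$. $p$-th Wasserstein distance: pad the smaller barcode with zero-length intervals $[t,t]$ until both have $n_{\max}=\max\{n_a,n_b\}$ intervals; $d_p(A,B)=\big(\min_\gamma\sum_i\max\{|x_i^a-x^b_{\gamma(i)}|^p,|y_i^a-y^b_{\gamma(i)}|^p\}\big)^{1/p}$ for $p<\infty$, $d_\infty(A,B)=\min_\gamma\max_i\max\{|x_i^a-x^b_{\gamma(i)}|,|y_i^a-y^b_{\gamma(i)}|\}$, minima over bijections $\gamma$ (and paddings). *)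

theory Defs
  imports "HOL-Analysis.Analysis" "HOL-Library.Multiset" "HOL-Library.Extended_Real"
begin

text \<open>An interval [x,y] with finite endpoints is a pair (x,y) of reals; a barcode in B_F
  is a finite multiset of such pairs with x \<le> y.\<close>

type_synonym barcode = "(real \<times> real) multiset"

definition barcode_F :: "barcode \<Rightarrow> bool" where
  "barcode_F A \<longleftrightarrow> (\<forall>I \<in># A. fst I \<le> snd I)"

definition proj :: "barcode \<Rightarrow> barcode" where
  "proj A = image_mset (\<lambda>(x, y). (0, y - x)) A"

definition paddings :: "barcode \<Rightarrow> nat \<Rightarrow> barcode set" where
  "paddings A n = {A'. size A' = n \<and> A \<subseteq># A' \<and> (\<forall>I \<in># A' - A. fst I = snd I)}"

text \<open>Matched lists: xs ! i is matched with ys ! i (this covers all bijections).\<close>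
definition matchings :: "barcode \<Rightarrow> barcode \<Rightarrow> ((real \<times> real) list \<times> (real \<times> real) list) set" where
  "matchings A B = {(xs, ys). mset xs \<in> paddings A (max (size A) (size B))
                             \<and> mset ys \<in> paddings B (max (size A) (size B))}"

definition pair_dist :: "real \<times> real \<Rightarrow> real \<times> real \<Rightarrow> real" where
  "pair_dist I J = max \<bar>fst I - fst J\<bar> \<bar>snd I - snd J\<bar>"

definition wasserstein :: "ereal \<Rightarrow> barcode \<Rightarrow> barcode \<Rightarrow> real" where
  "wasserstein p A B =
    (if p = \<infinity> then
       Inf {Max (insert 0 (set (map (\<lambda>(I, J). pair_dist I J) (zip xs ys)))) | xs ys.
              (xs, ys) \<in> matchings A B}
     else
       (Inf {(\<Sum>(I, J) \<leftarrow> zip xs ys. pair_dist I J powr real_of_ereal p) | xs ys.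
              (xs, ys) \<in> matchings A B}) powr (1 / real_of_ereal p))"

end

theory Submission
  imports Defs
begin

definition pf :: "real \<times> real \<Rightarrow> real \<times> real" where
  "pf = (\<lambda>(x, y). (0, y - x))"

lemma proj_pf: "proj A = image_mset pf A"
  by (simp add: proj_def pf_def)

lemma pad_proj:
  assumes "mset xs \<in> paddings A n"
  shows "mset (map pf xs) \<in> paddings (image_mset pf A) n"
proof -
  let ?M = "mset xs"
  have sub: "A \<subseteq># ?M" and sz: "size ?M = n" and z: "\<forall>I\<in># ?M - A. fst I = snd I"
    using assms by (auto simp: paddings_def)
  have eq: "?M = A + (?M - A)" using sub by (simp add: subset_mset.add_diff_inverse)
  have "image_mset pf ?M = image_mset pf A + image_mset pf (?M - A)"
    by (subst eq) simp
  hence d: "image_mset pf ?M - image_mset pf A = image_mset pf (?M - A)" by simp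
  show ?thesis
    unfolding paddings_def
  proof (intro CollectI conjI)
    show "size (mset (map pf xs)) = n" using sz by simp
    show "image_mset pf A \<subseteq># mset (map pf xs)"
      using sub by (simp add: image_mset_subseteq_mono)
    show "\<forall>I\<in>#mset (map pf xs) - image_mset pf A. fst I = snd I"
      using z d by (auto simp: pf_def split: prod.splits)
  qed
qed

lemma match_proj:
  assumes "(xs, ys) \<in> matchings A B"
  shows "(map pf xs, map pf ys) \<in> matchings (proj A) (proj B)"
  using assms pad_proj unfolding matchings_def proj_pf by auto

lemma pad_ex: "n \<ge> size A \<Longrightarrow> \<exists>xs. mset xs \<in> paddings A n"
proof -
  assume n: "n \<ge> size A"
  obtain as where as: "mset as = A" using ex_mset by blast
  let ?xs = "as @ replicate (n - size A) (0::real, 0::real)"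
  have "mset ?xs = A + replicate_mset (n - size A) (0,0)" using as by (simp add: mset_replicate)
  hence "mset ?xs \<in> paddings A n" using n by (auto simp: paddings_def)
  thus ?thesis by blast
qed

lemma match_ne: "\<exists>xs ys. (xs, ys) \<in> matchings A B"
  using pad_ex[of A "max (size A) (size B)"] pad_ex[of B "max (size A) (size B)"]
  unfolding matchings_def by auto

lemma pd_pf: "pair_dist (pf I) (pf J) \<le> 2 * pair_dist I J"
  by (cases I; cases J) (simp add: pair_dist_def pf_def, smt (verit))

lemma pd_nn: "0 \<le> pair_dist I J"
  by (simp add: pair_dist_def)

lemma zip_pf: "zip (map pf xs) (map pf ys) = map (\<lambda>(a, b). (pf a, pf b)) (zip xs ys)"
  by (simp add: zip_map_map)

lemma inf_le:
  fixes S S' :: "real set" and c :: real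
  assumes ne: "S \<noteq> {}" and nn: "\<forall>s\<in>S'. 0 \<le> s" and c: "c > 0"
    and w: "\<forall>s\<in>S. \<exists>s'\<in>S'. s' \<le> c * s"
  shows "Inf S' \<le> c * Inf S"
proof -
  have bdd: "bdd_below S'" using nn by (auto intro: bdd_belowI)
  have "\<forall>s\<in>S. Inf S' / c \<le> s"
  proof
    fix s assume "s \<in> S"
    then obtain s' where "s' \<in> S'" "s' \<le> c * s" using w by blast
    hence "Inf S' \<le> c * s" using cInf_lower[OF _ bdd] by (meson order_trans)
    thus "Inf S' / c \<le> s" using c by (simp add: field_simps)
  qed
  hence "Inf S' / c \<le> Inf S" using ne by (intro cInf_greatest) auto
  thus ?thesis using c by (simp add: field_simps)
qed

lemma inf_nn:
  fixes S :: "real set"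
  assumes "S \<noteq> {}" "\<forall>s\<in>S. 0 \<le> s"
  shows "0 \<le> Inf S"
  using assms by (intro cInf_greatest) auto

theorem lemma3:
  fixes A B :: barcode and p :: ereal
  assumes "barcode_F A" and "barcode_F B" and "1 \<le> p"
  shows "wasserstein p (proj A) (proj B) \<le> 2 * wasserstein p A B"
proof (cases "p = \<infinity>")
  case True
  let ?g = "\<lambda>xs ys. Max (insert 0 (set (map (\<lambda>(I, J). pair_dist I J) (zip xs ys))))"
  let ?S = "{?g xs ys | xs ys. (xs, ys) \<in> matchings A B}"
  let ?S' = "{?g xs ys | xs ys. (xs, ys) \<in> matchings (proj A) (proj B)}"
  have "Inf ?S' \<le> 2 * Inf ?S"
  proof (rule inf_le)
    show "?S \<noteq> {}" using match_ne[of A B] by auto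
    show "\<forall>s\<in>?S'. 0 \<le> s" by auto
    show "(2::real) > 0" by simp
    show "\<forall>s\<in>?S. \<exists>s'\<in>?S'. s' \<le> 2 * s"
    proof
      fix s assume "s \<in> ?S"
      then obtain xs ys where m: "(xs, ys) \<in> matchings A B" and s: "s = ?g xs ys" by blast
      have "?g (map pf xs) (map pf ys) \<le> 2 * s"
        unfolding s zip_pf
      proof (rule Max.boundedI)
        fix a assume "a \<in> insert 0 (set (map (\<lambda>(I, J). pair_dist I J) (map (\<lambda>(a, b). (pf a, pf b)) (zip xs ys))))"
        then consider "a = 0" | I J where "(I, J) \<in> set (zip xs ys)" "a = pair_dist (pf I) (pf J)"
          by auto
        thus "a \<le> 2 * ?g xs ys"
        proof cases
          case 1 thus ?thesis by simp
        next
          case 2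
          have "pair_dist I J \<le> ?g xs ys" using 2(1) by (intro Max_ge) force+
          thus ?thesis using 2(2) pd_pf[of I J] by linarith
        qed
      qed auto
      moreover have "?g (map pf xs) (map pf ys) \<in> ?S'" using match_proj[OF m] by blast
      ultimately show "\<exists>s'\<in>?S'. s' \<le> 2 * s" by blast
    qed
  qed
  thus ?thesis using True by (simp add: wasserstein_def)
next
  case False
  define r where "r = real_of_ereal p"
  have r1: "r \<ge> 1" using assms(3) False unfolding r_def
    by (cases p) auto
  let ?g = "\<lambda>xs ys. (\<Sum>(I, J) \<leftarrow> zip xs ys. pair_dist I J powr r)"
  let ?S = "{?g xs ys | xs ys. (xs, ys) \<in> matchings A B}"
  let ?S' = "{?g xs ys | xs ys. (xs, ys) \<in> matchings (proj A) (proj B)}"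
  have nnS: "\<forall>s\<in>?S. 0 \<le> s" by (auto intro!: sum_list_nonneg)
  have neS: "?S \<noteq> {}" using match_ne[of A B] by auto
  have neS': "?S' \<noteq> {}" using match_ne[of "proj A" "proj B"] by auto
  have key: "Inf ?S' \<le> 2 powr r * Inf ?S"
  proof (rule inf_le)
    show "?S \<noteq> {}" by (rule neS)
    show "\<forall>s\<in>?S'. 0 \<le> s" by (auto intro!: sum_list_nonneg)
    show "(2 powr r::real) > 0" by simp
    show "\<forall>s\<in>?S. \<exists>s'\<in>?S'. s' \<le> 2 powr r * s"
    proof
      fix s assume "s \<in> ?S"
      then obtain xs ys where m: "(xs, ys) \<in> matchings A B" and s: "s = ?g xs ys" by blast
      have "?g (map pf xs) (map pf ys) = (\<Sum>(I, J) \<leftarrow> zip xs ys. pair_dist (pf I) (pf J) powr r)"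
        unfolding zip_pf by (simp add: o_def case_prod_beta split_def)
      also have "\<dots> \<le> (\<Sum>(I, J) \<leftarrow> zip xs ys. 2 powr r * pair_dist I J powr r)"
      proof (rule sum_list_mono)
        fix x assume "x \<in> set (zip xs ys)"
        obtain I J where x: "x = (I, J)" by (cases x)
        have "pair_dist (pf I) (pf J) powr r \<le> (2 * pair_dist I J) powr r"
          using pd_pf pd_nn r1 by (intro powr_mono2) auto
        also have "\<dots> = 2 powr r * pair_dist I J powr r"
          using pd_nn by (simp add: powr_mult)
        finally show "(case x of (I, J) \<Rightarrow> pair_dist (pf I) (pf J) powr r)
            \<le> (case x of (I, J) \<Rightarrow> 2 powr r * pair_dist I J powr r)" using x by simp
      qed
      also have "\<dots> = 2 powr r * s"
        unfolding s by (simp add: case_prod_beta sum_list_const_mult[symmetric] o_def split_def)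
      finally have "?g (map pf xs) (map pf ys) \<le> 2 powr r * s" .
      moreover have "?g (map pf xs) (map pf ys) \<in> ?S'" using match_proj[OF m] by blast
      ultimately show "\<exists>s'\<in>?S'. s' \<le> 2 powr r * s" by blast
    qed
  qed
  have i0: "0 \<le> Inf ?S'" by (rule inf_nn[OF neS']) (auto intro!: sum_list_nonneg)
  have j0: "0 \<le> Inf ?S" by (rule inf_nn[OF neS nnS])
  have "Inf ?S' powr (1 / r) \<le> (2 powr r * Inf ?S) powr (1 / r)"
    using key i0 r1 by (intro powr_mono2) auto
  also have "\<dots> = (2 powr r) powr (1/r) * Inf ?S powr (1 / r)"
    using j0 by (simp add: powr_mult)
  also have "\<dots> = 2 * Inf ?S powr (1 / r)"
    using r1 by (simp add: powr_powr)
  finally show ?thesis using False unfolding wasserstein_def r_def by simp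
qed

end
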